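(* Let $\Gamma=\langle S\mid R\rangle$ be a finitely presented group and let $\varphi_n,\psi_n\colon S\to\mathrm U(k_n)$ be asymptotic representations with respect to a family of submultiplicative, unitarily invariant norms, such that $\max_{s\in S}\|\varphi_n(s)-\psi_n(s)\|=O_{\mathcal U}(\mathrm{def}(\varphi_n))$ and $\mathrm{def}(\psi_n)=o_{\mathcal U}(\mathrm{def}(\varphi_n))$. Then the $2$-cocycle $\alpha$ associated to $(\varphi_n)$ (described in the context) is trivial in $H^2(\Gamma,\mathrm M_{\mathcal U})$, i.e. there is $\beta\colon\Gamma\to\mathrm M_{\mathcal U}$ with $\alpha(g,h)=\varphi_{\mathcal U}(g)\beta(h)\varphi_{\mathcal U}(g)^*-\beta(gh)+\beta(g)$ for all $g,h\in\Gamma$.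
   Context: Fix a non-principal ultrafilter $\mathcal U$ on $\mathbb N$; $x_n=O_{\mathcal U}(y_n)$ means $x_n\le Cy_n$ for all $n$ in a set belonging to $\mathcal U$, some constant $C$; $x_n=o_{\mathcal U}(y_n)$ means $x_n=\varepsilon_ny_n$ with $\varepsilon_n\ge0$, $\lim_{n\to\mathcal U}\varepsilon_n=0$. $S,R$ are finite, $\mathbb F_S$ is free on $S$. For each $k$ a unitarily invariant, submultiplicative norm $\|\cdot\|$ on $\mathrm M_k(\mathbb C)$ is fixed. For $\varphi\colon S\to\mathrm U(k)$ (extended to $\mathbb F_S$), $\mathrm{def}(\varphi)=\max_{r\in R}\|\varphi(r)-1_k\|$; a sequence $\varphi_n\colon S\to\mathrm U(k_n)$ is an asymptotic representation if $\lim_{n\to\mathcal U}\mathrm{def}(\varphi_n)=0$. $\mathrm M_{\mathcal U}$ is the Banach space of bounded sequences $(T_n)$, $T_n\in\mathrm M_{k_n}(\mathbb C)$, modulo those with $\lim_{n\to\mathcal U}\|T_n\|=0$; $\mathrm U_{\mathcal U}$ is $\prod_n\mathrm U(k_n)$ modulo sequences with $\lim_{n\to\mathcal U}\|u_n-1\|=0$, acting on $\mathrm M_{\mathcal U}$ by left/right multiplication; $\varphi_{\mathcal U}\colon\Gamma\to\mathrm U_{\mathcal U}$ is the homomorphism induced by $(\varphi_n)$. The associated cocycle: fix a section $\sigma\colon\Gamma\to\mathbb F_S$ of the canonical surjection and $\tilde\varphi_n\colon\Gamma\to\mathrm U(k_n)$ with $\tilde\varphi_n(1_\Gamma)=1$,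 $\tilde\varphi_n(g^{-1})=\tilde\varphi_n(g)^*$, $\|\varphi_n(\sigma(g))-\tilde\varphi_n(g)\|=O_{\mathcal U}(\mathrm{def}(\varphi_n))$; let $c_n(g,h)=(\tilde\varphi_n(g)\tilde\varphi_n(h)-\tilde\varphi_n(gh))/\mathrm{def}(\varphi_n)$ if $\mathrm{def}(\varphi_n)>0$, else $0$, $c(g,h)\in\mathrm M_{\mathcal U}$ its class, and $\alpha(g,h)=c(g,h)\varphi_{\mathcal U}(gh)^*$. *)

theory Defs
  imports "Jordan_Normal_Form.Matrix"
begin

definition nonprincipal_ultrafilter :: "nat filter \<Rightarrow> bool" where
  "nonprincipal_ultrafilter U \<longleftrightarrow>
     U \<noteq> bot \<and> (\<forall>P. eventually P U \<or> eventually (\<lambda>n. \<not> P n) U)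
     \<and> (\<forall>m. \<not> eventually (\<lambda>n. n = m) U)"

definition bigO_U :: "nat filter \<Rightarrow> (nat \<Rightarrow> real) \<Rightarrow> (nat \<Rightarrow> real) \<Rightarrow> bool" where
  "bigO_U U x y \<longleftrightarrow> (\<exists>C. eventually (\<lambda>n. x n \<le> C * y n) U)"

definition smallo_U :: "nat filter \<Rightarrow> (nat \<Rightarrow> real) \<Rightarrow> (nat \<Rightarrow> real) \<Rightarrow> bool" where
  "smallo_U U x y \<longleftrightarrow> (\<exists>eps. (\<forall>n. eps n \<ge> 0) \<and> (eps \<longlongrightarrow> 0) U \<and> (\<forall>n. x n = eps n * y n))"

definition adj :: "complex mat \<Rightarrow> complex mat" where
  "adj A = transpose_mat (map_mat cnj A)"

definition unitary_mat :: "nat \<Rightarrow> complex mat \<Rightarrow> bool" where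
  "unitary_mat k A \<longleftrightarrow> A \<in> carrier_mat k k \<and> adj A * A = 1\<^sub>m k \<and> A * adj A = 1\<^sub>m k"

definition good_norm_family :: "(nat \<Rightarrow> complex mat \<Rightarrow> real) \<Rightarrow> bool" where
  "good_norm_family nrm \<longleftrightarrow> (\<forall>k.
     (\<forall>A\<in>carrier_mat k k. nrm k A \<ge> 0 \<and> (nrm k A = 0 \<longleftrightarrow> A = 0\<^sub>m k k)) \<and>
     (\<forall>A\<in>carrier_mat k k. \<forall>B\<in>carrier_mat k k. nrm k (A + B) \<le> nrm k A + nrm k B) \<and>
     (\<forall>A\<in>carrier_mat k k. \<forall>c. nrm k (c \<cdot>\<^sub>m A) = cmod c * nrm k A) \<and>
     (\<forall>A\<in>carrier_mat k k. \<forall>B\<in>carrier_mat k k. nrm k (A * B) \<le> nrm k A * nrm k B) \<and>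
     (\<forall>A\<in>carrier_mat k k. \<forall>V W. unitary_mat k V \<longrightarrow> unitary_mat k W \<longrightarrow>
         nrm k (V * A * W) = nrm k A))"

text \<open>A letter (s, False) stands for s, (s, True) for s^{-1}; elements of F_S are
  represented by words (lists of letters).\<close>
type_synonym 's word = "('s \<times> bool) list"

definition inv_letter :: "'s \<times> bool \<Rightarrow> 's \<times> bool" where
  "inv_letter x = (fst x, \<not> snd x)"

definition inv_word :: "'s word \<Rightarrow> 's word" where
  "inv_word w = rev (map inv_letter w)"

text \<open>The congruence on words whose classes are the elements of
  Gamma = F_S / <<R>>: free reduction plus relators.\<close>
inductive word_eq :: "'s word set \<Rightarrow> 's word \<Rightarrow> 's word \<Rightarrow> bool" for R where
  refl: "word_eq R u u"
| sym: "word_eq R u v \<Longrightarrow> word_eq R v u"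
| trans: "word_eq R u v \<Longrightarrow> word_eq R v w \<Longrightarrow> word_eq R u w"
| cong: "word_eq R u v \<Longrightarrow> word_eq R (a @ u @ b) (a @ v @ b)"
| cancel: "word_eq R [x, inv_letter x] []"
| rel: "r \<in> R \<Longrightarrow> word_eq R r []"

definition wclass :: "'s word set \<Rightarrow> 's word \<Rightarrow> 's word set" where
  "wclass R w = {v. word_eq R w v}"

text \<open>The carrier of Gamma = <S | R> (S = UNIV of the generator type).\<close>
definition Gamma :: "'s word set \<Rightarrow> 's word set set" where
  "Gamma R = range (wclass R)"

definition gmul :: "'s word set \<Rightarrow> 's word set \<Rightarrow> 's word set \<Rightarrow> 's word set" where
  "gmul R g h = {w. \<exists>u\<in>g. \<exists>v\<in>h. word_eq R (u @ v) w}"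

definition gone :: "'s word set \<Rightarrow> 's word set" where
  "gone R = wclass R []"

definition ginv :: "'s word set \<Rightarrow> 's word set \<Rightarrow> 's word set" where
  "ginv R g = {w. \<exists>u\<in>g. word_eq R (inv_word u) w}"

fun weval :: "('s \<Rightarrow> complex mat) \<Rightarrow> nat \<Rightarrow> 's word \<Rightarrow> complex mat" where
  "weval phi k [] = 1\<^sub>m k"
| "weval phi k (x # w) = (if snd x then adj (phi (fst x)) else phi (fst x)) * weval phi k w"

definition defect :: "(nat \<Rightarrow> complex mat \<Rightarrow> real) \<Rightarrow> 's word set \<Rightarrow> nat \<Rightarrow> ('s \<Rightarrow> complex mat) \<Rightarrow> real" where
  "defect nrm R k phi = (if R = {} then 0 else Max ((\<lambda>r. nrm k (weval phi k r - 1\<^sub>m k)) ` R))"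

definition asymptotic_rep ::
  "nat filter \<Rightarrow> (nat \<Rightarrow> complex mat \<Rightarrow> real) \<Rightarrow> 's word set \<Rightarrow> (nat \<Rightarrow> nat) \<Rightarrow> (nat \<Rightarrow> 's \<Rightarrow> complex mat) \<Rightarrow> bool" where
  "asymptotic_rep U nrm R k phi \<longleftrightarrow>
     (\<forall>n s. unitary_mat (k n) (phi n s)) \<and>
     ((\<lambda>n. defect nrm R (k n) (phi n)) \<longlongrightarrow> 0) U"

definition cocycle_c ::
  "(nat \<Rightarrow> complex mat \<Rightarrow> real) \<Rightarrow> 's word set \<Rightarrow> (nat \<Rightarrow> nat) \<Rightarrow> (nat \<Rightarrow> 's \<Rightarrow> complex mat)
   \<Rightarrow> (nat \<Rightarrow> 's word set \<Rightarrow> complex mat) \<Rightarrow> 's word set \<Rightarrow> 's word set \<Rightarrow> nat \<Rightarrow> complex mat" where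
  "cocycle_c nrm R k phi phit g h n =
     (let d = defect nrm R (k n) (phi n) in
      if d > 0 then (1 / complex_of_real d) \<cdot>\<^sub>m (phit n g * phit n h - phit n (gmul R g h))
      else 0\<^sub>m (k n) (k n))"

text \<open>Representative sequence of alpha(g,h) = c(g,h) phi_U(gh)^*, where phi_U(x) is
  the class of (phi_n(sigma x))_n.\<close>
definition cocycle_alpha ::
  "(nat \<Rightarrow> complex mat \<Rightarrow> real) \<Rightarrow> 's word set \<Rightarrow> (nat \<Rightarrow> nat) \<Rightarrow> (nat \<Rightarrow> 's \<Rightarrow> complex mat)
   \<Rightarrow> ('s word set \<Rightarrow> 's word) \<Rightarrow> (nat \<Rightarrow> 's word set \<Rightarrow> complex mat)
   \<Rightarrow> 's word set \<Rightarrow> 's word set \<Rightarrow> nat \<Rightarrow> complex mat" where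
  "cocycle_alpha nrm R k phi sigma phit g h n =
     cocycle_c nrm R k phi phit g h n * adj (weval (phi n) (k n) (sigma (gmul R g h)))"

end

theory Submission
  imports Defs
begin


lemma (in ring) key_identity:
  assumes c: "Tg \<in> carrier R" "Th \<in> carrier R" "Tgh \<in> carrier R" "Pg \<in> carrier R" "Ph \<in> carrier R" "Pgh \<in> carrier R"
    "Fg \<in> carrier R" "Fh \<in> carrier R" "Fgh \<in> carrier R" "Gg \<in> carrier R" "Gh \<in> carrier R" "Ggh \<in> carrier R"
  and u: "Gg \<otimes> Fg = \<one>" "Fg \<otimes> Gg = \<one>" "Gh \<otimes> Fh = \<one>" "Fh \<otimes> Gh = \<one>" "Ggh \<otimes> Fgh = \<one>" "Fgh \<otimes> Ggh = \<one>"
  shows "(Tg \<otimes> Th \<ominus> Tgh) \<otimes> Ggh \<ominus> (Fg \<otimes> (Th \<ominus> Ph) \<otimes> Gh \<otimes> Gg \<ominus> (Tgh \<ominus> Pgh) \<otimes> Ggh \<oplus> (Tg \<ominus> Pg) \<otimes> Gg)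
    = (Tg \<ominus> Pg) \<otimes> Gg \<otimes> (Fg \<otimes> Fh \<ominus> Fgh) \<otimes> Ggh
      \<oplus> Fg \<otimes> (Th \<ominus> Ph) \<otimes> Gh \<otimes> Gg \<otimes> (Fg \<otimes> Fh \<ominus> Fgh) \<otimes> Ggh
      \<oplus> ((Tg \<ominus> Fg) \<otimes> (Th \<ominus> Fh) \<ominus> (Pg \<ominus> Fg) \<otimes> (Ph \<ominus> Fh)) \<otimes> Ggh
      \<oplus> (Pg \<otimes> Ph \<ominus> Pgh) \<otimes> Ggh"
proof -
  have u2: "Gg \<otimes> (Fg \<otimes> x) = x" "Fg \<otimes> (Gg \<otimes> x) = x" "Gh \<otimes> (Fh \<otimes> x) = x" "Fh \<otimes> (Gh \<otimes> x) = x"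
     "Ggh \<otimes> (Fgh \<otimes> x) = x" "Fgh \<otimes> (Ggh \<otimes> x) = x" if "x \<in> carrier R" for x
    using that c u by (simp_all flip: m_assoc)
  show ?thesis using c u u2 apply algebra using c by simp
qed

lemma rm_minus:
  assumes "A \<in> carrier_mat m m" "B \<in> carrier_mat m m"
  shows "a_minus (ring_mat TYPE(complex) m ()) A B = A - B"
proof -
  interpret ring "ring_mat TYPE(complex) m ()" by (rule ring_mat)
  have "a_inv (ring_mat TYPE(complex) m ()) B = - B"
    by (rule minus_equality) (use assms in \<open>auto simp: ring_mat_simps\<close>)
  then show ?thesis using assms by (simp add: minus_eq ring_mat_simps minus_add_uminus_mat)
qed

lemma key_mat:
  fixes Tg Th Tgh Pg Ph Pgh Fg Fh Fgh Gg Gh Ggh :: "complex mat"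
  assumes c: "Tg \<in> carrier_mat m m" "Th \<in> carrier_mat m m" "Tgh \<in> carrier_mat m m" "Pg \<in> carrier_mat m m" "Ph \<in> carrier_mat m m" "Pgh \<in> carrier_mat m m"
    "Fg \<in> carrier_mat m m" "Fh \<in> carrier_mat m m" "Fgh \<in> carrier_mat m m" "Gg \<in> carrier_mat m m" "Gh \<in> carrier_mat m m" "Ggh \<in> carrier_mat m m"
  and u: "Gg * Fg = 1\<^sub>m m" "Fg * Gg = 1\<^sub>m m" "Gh * Fh = 1\<^sub>m m" "Fh * Gh = 1\<^sub>m m" "Ggh * Fgh = 1\<^sub>m m" "Fgh * Ggh = 1\<^sub>m m"
  shows "(Tg * Th - Tgh) * Ggh - (Fg * (Th - Ph) * Gh * Gg - (Tgh - Pgh) * Ggh + (Tg - Pg) * Gg)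
    = (Tg - Pg) * Gg * (Fg * Fh - Fgh) * Ggh
      + Fg * (Th - Ph) * Gh * Gg * (Fg * Fh - Fgh) * Ggh
      + ((Tg - Fg) * (Th - Fh) - (Pg - Fg) * (Ph - Fh)) * Ggh
      + (Pg * Ph - Pgh) * Ggh"
proof -
  interpret ring "ring_mat TYPE(complex) m ()" by (rule ring_mat)
  have "(Tg \<otimes>\<^bsub>ring_mat TYPE(complex) m ()\<^esub> Th \<ominus>\<^bsub>ring_mat TYPE(complex) m ()\<^esub> Tgh) \<otimes>\<^bsub>ring_mat TYPE(complex) m ()\<^esub> Ggh \<ominus>\<^bsub>ring_mat TYPE(complex) m ()\<^esub> (Fg \<otimes>\<^bsub>ring_mat TYPE(complex) m ()\<^esub> (Th \<ominus>\<^bsub>ring_mat TYPE(complex) m ()\<^esub> Ph) \<otimes>\<^bsub>ring_mat TYPE(complex) m ()\<^esub> Gh \<otimes>\<^bsub>ring_mat TYPE(complex) m ()\<^esub> Gg \<ominus>\<^bsub>ring_mat TYPE(complex) m ()\<^esub> (Tgh \<ominus>\<^bsub>ring_mat TYPE(complex) m ()\<^esub> Pgh) \<otimes>\<^bsub>ring_mat TYPE(complex) m ()\<^esub> Ggh \<oplus>\<^bsub>ring_mat TYPE(complex) m ()\<^esub> (Tg \<ominus>\<^bsub>ring_mat TYPE(complex) m ()\<^esub> Pg) \<otimes>\<^bsub>ring_mat TYPE(complex) m ()\<^esub> Gg)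
    = (Tg \<ominus>\<^bsub>ring_mat TYPE(complex) m ()\<^esub> Pg) \<otimes>\<^bsub>ring_mat TYPE(complex) m ()\<^esub> Gg \<otimes>\<^bsub>ring_mat TYPE(complex) m ()\<^esub> (Fg \<otimes>\<^bsub>ring_mat TYPE(complex) m ()\<^esub> Fh \<ominus>\<^bsub>ring_mat TYPE(complex) m ()\<^esub> Fgh) \<otimes>\<^bsub>ring_mat TYPE(complex) m ()\<^esub> Ggh
      \<oplus>\<^bsub>ring_mat TYPE(complex) m ()\<^esub> Fg \<otimes>\<^bsub>ring_mat TYPE(complex) m ()\<^esub> (Th \<ominus>\<^bsub>ring_mat TYPE(complex) m ()\<^esub> Ph) \<otimes>\<^bsub>ring_mat TYPE(complex) m ()\<^esub> Gh \<otimes>\<^bsub>ring_mat TYPE(complex) m ()\<^esub> Gg \<otimes>\<^bsub>ring_mat TYPE(complex) m ()\<^esub> (Fg \<otimes>\<^bsub>ring_mat TYPE(complex) m ()\<^esub> Fh \<ominus>\<^bsub>ring_mat TYPE(complex) m ()\<^esub> Fgh) \<otimes>\<^bsub>ring_mat TYPE(complex) m ()\<^esub> Ggh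
      \<oplus>\<^bsub>ring_mat TYPE(complex) m ()\<^esub> ((Tg \<ominus>\<^bsub>ring_mat TYPE(complex) m ()\<^esub> Fg) \<otimes>\<^bsub>ring_mat TYPE(complex) m ()\<^esub> (Th \<ominus>\<^bsub>ring_mat TYPE(complex) m ()\<^esub> Fh) \<ominus>\<^bsub>ring_mat TYPE(complex) m ()\<^esub> (Pg \<ominus>\<^bsub>ring_mat TYPE(complex) m ()\<^esub> Fg) \<otimes>\<^bsub>ring_mat TYPE(complex) m ()\<^esub> (Ph \<ominus>\<^bsub>ring_mat TYPE(complex) m ()\<^esub> Fh)) \<otimes>\<^bsub>ring_mat TYPE(complex) m ()\<^esub> Ggh
      \<oplus>\<^bsub>ring_mat TYPE(complex) m ()\<^esub> (Pg \<otimes>\<^bsub>ring_mat TYPE(complex) m ()\<^esub> Ph \<ominus>\<^bsub>ring_mat TYPE(complex) m ()\<^esub> Pgh) \<otimes>\<^bsub>ring_mat TYPE(complex) m ()\<^esub> Ggh"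
    by (rule key_identity) (use c u in \<open>simp_all add: ring_mat_simps\<close>)
  moreover have cc: "\<And>A B. A \<in> carrier_mat m m \<Longrightarrow> B \<in> carrier_mat m m \<Longrightarrow> A * B \<in> carrier_mat m m"
    "\<And>A B. A \<in> carrier_mat m m \<Longrightarrow> B \<in> carrier_mat m m \<Longrightarrow> A - B \<in> carrier_mat m m"
    "\<And>A B. A \<in> carrier_mat m m \<Longrightarrow> B \<in> carrier_mat m m \<Longrightarrow> A + B \<in> carrier_mat m m"
    by auto
  ultimately show ?thesis using c by (simp add: ring_mat_simps rm_minus cc)
qed



lemma adj_carrier[simp]: "A \<in> carrier_mat m m \<Longrightarrow> adj A \<in> carrier_mat m m"
  unfolding adj_def by auto

lemma adj_one: "adj (1\<^sub>m m) = 1\<^sub>m m"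
  unfolding adj_def by (rule eq_matI) auto

lemma unitary_one: "unitary_mat m (1\<^sub>m m)"
  unfolding unitary_mat_def by (simp add: adj_one)

lemma sq_simps:
  "A \<in> carrier_mat m m \<Longrightarrow> B \<in> carrier_mat m m \<Longrightarrow> A * B \<in> carrier_mat m m"
  "A \<in> carrier_mat m m \<Longrightarrow> B \<in> carrier_mat m m \<Longrightarrow> A + B \<in> carrier_mat m m"
  "A \<in> carrier_mat m m \<Longrightarrow> B \<in> carrier_mat m m \<Longrightarrow> A - B \<in> carrier_mat m m"
  "A \<in> carrier_mat m m \<Longrightarrow> c \<cdot>\<^sub>m A \<in> carrier_mat m m"
  "A \<in> carrier_mat m m \<Longrightarrow> B \<in> carrier_mat m m \<Longrightarrow> C \<in> carrier_mat m m \<Longrightarrow> A * B * C = A * (B * C)"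
  "A \<in> carrier_mat m m \<Longrightarrow> 1\<^sub>m m * A = A"
  "A \<in> carrier_mat m m \<Longrightarrow> A * 1\<^sub>m m = A"
  "A \<in> carrier_mat m m \<Longrightarrow> adj A \<in> carrier_mat m m"
  by (auto simp: adj_def)

context
  fixes nrm :: "nat \<Rightarrow> complex mat \<Rightarrow> real"
  assumes gnf: "good_norm_family nrm"
begin

lemma nrm_nonneg: "A \<in> carrier_mat m m \<Longrightarrow> 0 \<le> nrm m A"
  using gnf unfolding good_norm_family_def by blast
lemma nrm_zero: "nrm m (0\<^sub>m m m) = 0"
proof -
  have "\<forall>A\<in>carrier_mat m m. nrm m A = 0 \<longleftrightarrow> A = 0\<^sub>m m m" using gnf unfolding good_norm_family_def by blast
  then show ?thesis by simp
qed
lemma nrm_tri: "A \<in> carrier_mat m m \<Longrightarrow> B \<in> carrier_mat m m \<Longrightarrow> nrm m (A + B) \<le> nrm m A + nrm m B"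
  using gnf unfolding good_norm_family_def by blast
lemma nrm_scale: "A \<in> carrier_mat m m \<Longrightarrow> nrm m (c \<cdot>\<^sub>m A) = cmod c * nrm m A"
  using gnf unfolding good_norm_family_def by blast
lemma nrm_sub: "A \<in> carrier_mat m m \<Longrightarrow> B \<in> carrier_mat m m \<Longrightarrow> nrm m (A * B) \<le> nrm m A * nrm m B"
  using gnf unfolding good_norm_family_def by blast
lemma nrm_uinv: "A \<in> carrier_mat m m \<Longrightarrow> unitary_mat m V \<Longrightarrow> unitary_mat m W \<Longrightarrow> nrm m (V * A * W) = nrm m A"
  using gnf unfolding good_norm_family_def by blast



lemma nrm_left: "A \<in> carrier_mat m m \<Longrightarrow> unitary_mat m V \<Longrightarrow> nrm m (V * A) = nrm m A"
  using nrm_uinv[of A m V "1\<^sub>m m"] unitary_one unfolding unitary_mat_def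
  by (metis mult_carrier_mat right_mult_one_mat)

lemma nrm_right: "A \<in> carrier_mat m m \<Longrightarrow> unitary_mat m W \<Longrightarrow> nrm m (A * W) = nrm m A"
  using nrm_uinv[of A m "1\<^sub>m m" W] unitary_one unfolding unitary_mat_def
  by (metis left_mult_one_mat)

lemma minus_as_smult: "A \<in> carrier_mat m m \<Longrightarrow> B \<in> carrier_mat m m \<Longrightarrow> A - (B::complex mat) = A + (-1) \<cdot>\<^sub>m B"
  by (rule eq_matI) auto

lemma nrm_minus_le: "A \<in> carrier_mat m m \<Longrightarrow> B \<in> carrier_mat m m \<Longrightarrow> nrm m (A - B) \<le> nrm m A + nrm m B"
  using nrm_tri[of A m "(-1) \<cdot>\<^sub>m B"] nrm_scale[of B m "-1"] by (simp add: minus_as_smult)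

lemma nrm_minus_comm: "A \<in> carrier_mat m m \<Longrightarrow> B \<in> carrier_mat m m \<Longrightarrow> nrm m (A - B) = nrm m (B - A)"
proof -
  assume a: "A \<in> carrier_mat m m" "B \<in> carrier_mat m m"
  have "B - A = (-1) \<cdot>\<^sub>m (A - B)" using a by (intro eq_matI) auto
  moreover have "nrm m ((-1) \<cdot>\<^sub>m (A - B)) = nrm m (A - B)" using a nrm_scale[of "A - B" m "-1"] by (simp add: sq_simps)
  ultimately show ?thesis by simp
qed

end

lemma adj_adj: "adj (adj A) = A"
  unfolding adj_def by (rule eq_matI) auto

lemma adj_mult: "A \<in> carrier_mat m m \<Longrightarrow> B \<in> carrier_mat m m \<Longrightarrow> adj (A * B) = adj B * adj A"
  unfolding adj_def
  by (rule eq_matI) (auto simp: scalar_prod_def mult.commute intro!: sum.cong)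

lemma unitary_carrier: "unitary_mat m A \<Longrightarrow> A \<in> carrier_mat m m"
  unfolding unitary_mat_def by blast

lemma unitary_adj: "unitary_mat m A \<Longrightarrow> unitary_mat m (adj A)"
  unfolding unitary_mat_def by (simp add: adj_adj)

lemma inv_mult_aux:
  fixes A B A' B' :: "complex mat"
  assumes "A \<in> carrier_mat m m" "B \<in> carrier_mat m m" "A' \<in> carrier_mat m m" "B' \<in> carrier_mat m m"
    "A' * A = 1\<^sub>m m" "B' * B = 1\<^sub>m m"
  shows "B' * A' * (A * B) = 1\<^sub>m m"
proof -
  have "B' * A' * (A * B) = B' * ((A' * A) * B)" using assms(1-4) by (simp add: sq_simps)
  also have "\<dots> = B' * B" by (simp only: assms(5) sq_simps(6)[OF assms(2)])
  finally show ?thesis using assms(6) by simp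
qed

lemma unitary_mult: assumes "unitary_mat m A" "unitary_mat m B" shows "unitary_mat m (A * B)"
proof -
  have c: "A \<in> carrier_mat m m" "B \<in> carrier_mat m m" "adj A \<in> carrier_mat m m" "adj B \<in> carrier_mat m m"
    using assms unfolding unitary_mat_def adj_def by auto
  have e: "adj (A*B) = adj B * adj A" by (rule adj_mult[OF c(1,2)])
  have 1: "adj (A*B) * (A * B) = 1\<^sub>m m" unfolding e using c assms inv_mult_aux[of A m B "adj A" "adj B"]
    unfolding unitary_mat_def by simp
  have 2: "A * B * adj (A*B) = 1\<^sub>m m" unfolding e using c assms inv_mult_aux[of "adj B" m "adj A" B A]
    unfolding unitary_mat_def by simp
  show ?thesis using 1 2 c unfolding unitary_mat_def by auto
qed

lemma weval_unitary: "(\<And>s. unitary_mat m (phi s)) \<Longrightarrow> unitary_mat m (weval phi m w)"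
  by (induction w) (auto simp: unitary_one intro!: unitary_mult unitary_adj)

lemma weval_append: "(\<And>s. unitary_mat m (phi s)) \<Longrightarrow> weval phi m (u @ v) = weval phi m u * weval phi m v"
proof (induction u)
  case Nil then show ?case using weval_unitary[of m phi v] unitary_carrier by (metis append_Nil left_mult_one_mat weval.simps(1))
next
  case (Cons x u)
  have c: "weval phi m u \<in> carrier_mat m m" "weval phi m v \<in> carrier_mat m m"
      "(if snd x then adj (phi (fst x)) else phi (fst x)) \<in> carrier_mat m m"
    using Cons.prems weval_unitary[of m phi, OF Cons.prems] unitary_carrier unitary_adj by auto
  show ?case using Cons c by (simp add: sq_simps)
qed



lemma sq_alg:
  fixes A B C :: "complex mat"
  shows
  "A \<in> carrier_mat m m \<Longrightarrow> B \<in> carrier_mat m m \<Longrightarrow> C \<in> carrier_mat m m \<Longrightarrow> A * (B - C) = A * B - A * C"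
  "A \<in> carrier_mat m m \<Longrightarrow> B \<in> carrier_mat m m \<Longrightarrow> C \<in> carrier_mat m m \<Longrightarrow> (A - B) * C = A * C - B * C"
  "A \<in> carrier_mat m m \<Longrightarrow> B \<in> carrier_mat m m \<Longrightarrow> C \<in> carrier_mat m m \<Longrightarrow> A * (B + C) = A * B + A * C"
  "A \<in> carrier_mat m m \<Longrightarrow> B \<in> carrier_mat m m \<Longrightarrow> C \<in> carrier_mat m m \<Longrightarrow> (A + B) * C = A * C + B * C"
  "A \<in> carrier_mat m m \<Longrightarrow> B \<in> carrier_mat m m \<Longrightarrow> A * (k \<cdot>\<^sub>m B) = k \<cdot>\<^sub>m (A * B)"
  "A \<in> carrier_mat m m \<Longrightarrow> B \<in> carrier_mat m m \<Longrightarrow> (k \<cdot>\<^sub>m A) * B = k \<cdot>\<^sub>m (A * B)"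
  "A \<in> carrier_mat m m \<Longrightarrow> B \<in> carrier_mat m m \<Longrightarrow> k \<cdot>\<^sub>m A - k \<cdot>\<^sub>m B = k \<cdot>\<^sub>m (A - B)"
  "A \<in> carrier_mat m m \<Longrightarrow> B \<in> carrier_mat m m \<Longrightarrow> k \<cdot>\<^sub>m A + k \<cdot>\<^sub>m B = k \<cdot>\<^sub>m (A + B)"
  by (auto simp: mult_minus_distrib_mat minus_mult_distrib_mat mult_add_distrib_mat add_mult_distrib_mat
     mult_smult_distrib mult_smult_assoc_mat intro!: eq_matI simp: algebra_simps)

lemma sq_add:
  fixes A B C :: "complex mat"
  shows
  "A \<in> carrier_mat m m \<Longrightarrow> B \<in> carrier_mat m m \<Longrightarrow> C \<in> carrier_mat m m \<Longrightarrow> A - C = (A - B) + (B - C)"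
  "A \<in> carrier_mat m m \<Longrightarrow> A - A = 0\<^sub>m m m"
  by (auto intro!: eq_matI)

lemma defect_nonneg:
  assumes "good_norm_family nrm" "finite R" "unitary_mat m (weval phi m r)" "r \<in> R"
  shows "nrm m (weval phi m r - 1\<^sub>m m) \<le> defect nrm R m phi"
  using assms unfolding defect_def by (auto intro!: Max_ge)

lemma defect_ge0:
  assumes "good_norm_family nrm" "finite R" "\<And>s. unitary_mat m (phi s)"
  shows "0 \<le> defect nrm R m phi"
proof (cases "R = {}")
  case True then show ?thesis by (simp add: defect_def)
next
  case False
  then obtain r where r: "r \<in> R" by blast
  have "0 \<le> nrm m (weval phi m r - 1\<^sub>m m)"
    using nrm_nonneg[OF assms(1)] weval_unitary[of m phi r, OF assms(3)] unitary_carrier sq_simps(3)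
    by (metis one_carrier_mat)
  also have "\<dots> \<le> defect nrm R m phi"
    using defect_nonneg[OF assms(1,2) _ r] weval_unitary[of m phi r, OF assms(3)] by blast
  finally show ?thesis .
qed

lemma word_eq_bound:
  assumes gnf: "good_norm_family nrm" and finR: "finite R" and un: "\<And>n s. unitary_mat (k n) (phi n s)"
  shows "word_eq R u v \<Longrightarrow> \<exists>C. \<forall>n. nrm (k n) (weval (phi n) (k n) u - weval (phi n) (k n) v)
            \<le> C * defect nrm R (k n) (phi n)"
proof (induction rule: word_eq.induct)
  note W = weval_unitary[of "k n" "phi n" for n, OF un, THEN unitary_carrier]
  note D = defect_ge0[OF gnf finR un]
  case (refl u)
  show ?case by (rule exI[of _ 0]) (simp add: sq_add(2)[OF W] nrm_zero[OF gnf])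
next
  note W = weval_unitary[of "k n" "phi n" for n, OF un, THEN unitary_carrier]
  case (sym u v)
  then show ?case using nrm_minus_comm[OF gnf] W by metis
next
  note W = weval_unitary[of "k n" "phi n" for n, OF un, THEN unitary_carrier]
  note D = defect_ge0[OF gnf finR un]
  case (trans u v w)
  then obtain C1 C2 where c1: "\<forall>n. nrm (k n) (weval (phi n) (k n) u - weval (phi n) (k n) v) \<le> C1 * defect nrm R (k n) (phi n)"
    and c2: "\<forall>n. nrm (k n) (weval (phi n) (k n) v - weval (phi n) (k n) w) \<le> C2 * defect nrm R (k n) (phi n)" by blast
  show ?case
  proof (rule exI[of _ "C1 + C2"], rule allI)
    fix n
    have "nrm (k n) (weval (phi n) (k n) u - weval (phi n) (k n) w)
       \<le> nrm (k n) (weval (phi n) (k n) u - weval (phi n) (k n) v) + nrm (k n) (weval (phi n) (k n) v - weval (phi n) (k n) w)"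
      using nrm_tri[OF gnf] W sq_add(1)[of "weval (phi n) (k n) u" "k n" "weval (phi n) (k n) v" "weval (phi n) (k n) w"]
      by (metis sq_simps(3))
    also have "\<dots> \<le> (C1 + C2) * defect nrm R (k n) (phi n)" using c1 c2 by (simp add: algebra_simps add_mono)
    finally show "nrm (k n) (weval (phi n) (k n) u - weval (phi n) (k n) w) \<le> (C1 + C2) * defect nrm R (k n) (phi n)" .
  qed
next
  note W = weval_unitary[of "k n" "phi n" for n, OF un]
  note C = W[THEN unitary_carrier]
  case (cong u v a b)
  then obtain C where c: "\<forall>n. nrm (k n) (weval (phi n) (k n) u - weval (phi n) (k n) v) \<le> C * defect nrm R (k n) (phi n)" by blast
  show ?case
  proof (rule exI[of _ C], rule allI)
    fix n
    have "weval (phi n) (k n) (a @ u @ b) - weval (phi n) (k n) (a @ v @ b)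
       = weval (phi n) (k n) a * (weval (phi n) (k n) u - weval (phi n) (k n) v) * weval (phi n) (k n) b"
      using C by (simp add: weval_append[of "k n" "phi n", OF un] sq_alg[where m="k n"] sq_simps[where m="k n"])
    moreover have "nrm (k n) (weval (phi n) (k n) a * (weval (phi n) (k n) u - weval (phi n) (k n) v) * weval (phi n) (k n) b)
       = nrm (k n) (weval (phi n) (k n) u - weval (phi n) (k n) v)"
      using nrm_uinv[OF gnf] W C sq_simps(3) by metis
    ultimately show "nrm (k n) (weval (phi n) (k n) (a @ u @ b) - weval (phi n) (k n) (a @ v @ b)) \<le> C * defect nrm R (k n) (phi n)"
      using c by simp
  qed
next
  note W = weval_unitary[of "k n" "phi n" for n, OF un]
  note C = W[THEN unitary_carrier]
  case (cancel x)
  show ?case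
  proof (rule exI[of _ 0], rule allI)
    fix n
    have u: "unitary_mat (k n) (phi n (fst x))" by (rule un)
    then have "weval (phi n) (k n) [x, inv_letter x] = 1\<^sub>m (k n)"
      by (cases "snd x") (auto simp: inv_letter_def unitary_mat_def sq_simps)
    then show "nrm (k n) (weval (phi n) (k n) [x, inv_letter x] - weval (phi n) (k n) []) \<le> 0 * defect nrm R (k n) (phi n)"
      by (simp add: sq_add(2)[OF one_carrier_mat] nrm_zero[OF gnf])
  qed
next
  note W = weval_unitary[of "k n" "phi n" for n, OF un]
  case (rel r)
  show ?case
    by (rule exI[of _ 1]) (use defect_nonneg[OF gnf finR W rel] in simp)
qed

lemma adj_diff_identity:
  assumes "unitary_mat m A" "unitary_mat m B"
  shows "adj A - adj B = adj A * (B - A) * adj B"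
proof -
  have c: "A \<in> carrier_mat m m" "B \<in> carrier_mat m m" "adj A \<in> carrier_mat m m" "adj B \<in> carrier_mat m m"
    using assms unitary_carrier unitary_adj by blast+
  have u: "B * adj B = 1\<^sub>m m" "adj A * A = 1\<^sub>m m" using assms unfolding unitary_mat_def by auto
  have "adj A * (B - A) * adj B = adj A * (B * adj B) - (adj A * A) * adj B"
    using c by (simp add: sq_alg[where m=m] sq_simps[where m=m])
  also have "\<dots> = adj A - adj B" using c u by (simp add: sq_simps[where m=m])
  finally show ?thesis by simp
qed

lemma weval_close:
  fixes phi psi :: "'s::finite \<Rightarrow> complex mat"
  assumes gnf: "good_norm_family nrm" and u1: "\<And>s. unitary_mat m (phi s)" and u2: "\<And>s. unitary_mat m (psi s)"
  shows "nrm m (weval phi m w - weval psi m w) \<le> real (length w) * Max (range (\<lambda>s. nrm m (phi s - psi s)))"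
proof (induction w)
  case Nil
  then show ?case by (simp add: sq_add(2)[OF one_carrier_mat] nrm_zero[OF gnf])
next
  case (Cons x w)
  define M where "M = Max (range (\<lambda>s. nrm m (phi s - psi s)))"
  define L1 where "L1 = (if snd x then adj (phi (fst x)) else phi (fst x))"
  define L2 where "L2 = (if snd x then adj (psi (fst x)) else psi (fst x))"
  define W1 where "W1 = weval phi m w"
  define W2 where "W2 = weval psi m w"
  have uL: "unitary_mat m L1" "unitary_mat m L2" unfolding L1_def L2_def using u1 u2 unitary_adj by auto
  have uW: "unitary_mat m W1" "unitary_mat m W2" unfolding W1_def W2_def using weval_unitary u1 u2 by auto
  note c = uL[THEN unitary_carrier] uW[THEN unitary_carrier]
  have Mge: "nrm m (phi s - psi s) \<le> M" for s unfolding M_def by (rule Max_ge) auto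
  have L: "nrm m (L1 - L2) \<le> M"
  proof (cases "snd x")
    case True
    have "nrm m (L1 - L2) = nrm m (adj (phi (fst x)) * (psi (fst x) - phi (fst x)) * adj (psi (fst x)))"
      unfolding L1_def L2_def using True adj_diff_identity[OF u1 u2] by simp
    also have "\<dots> = nrm m (psi (fst x) - phi (fst x))"
      using nrm_uinv[OF gnf] unitary_adj u1 u2 unitary_carrier sq_simps(3) by metis
    also have "\<dots> = nrm m (phi (fst x) - psi (fst x))"
      using nrm_minus_comm[OF gnf] u1 u2 unitary_carrier by metis
    finally show ?thesis using Mge by simp
  next
    case False then show ?thesis unfolding L1_def L2_def using Mge by simp
  qed
  have "L1 * W1 - L2 * W2 = L1 * (W1 - W2) + (L1 - L2) * W2"
  proof -
    have "L1 * (W1 - W2) + (L1 - L2) * W2 = (L1 * W1 - L1 * W2) + (L1 * W2 - L2 * W2)"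
      using c by (simp add: sq_alg[where m=m])
    also have "\<dots> = L1 * W1 - L2 * W2" using c by (metis sq_add(1) sq_simps(1))
    finally show ?thesis by simp
  qed
  then have "nrm m (L1 * W1 - L2 * W2) \<le> nrm m (L1 * (W1 - W2)) + nrm m ((L1 - L2) * W2)"
    using nrm_tri[OF gnf] c sq_simps by metis
  also have "\<dots> = nrm m (W1 - W2) + nrm m (L1 - L2)"
    using nrm_left[OF gnf] nrm_right[OF gnf] c uL uW sq_simps by metis
  also have "\<dots> \<le> real (length w) * M + M" using Cons L unfolding W1_def W2_def M_def by simp
  finally show ?case unfolding L1_def L2_def W1_def W2_def M_def by (simp add: algebra_simps)
qed

lemma word_eq_append: "word_eq R u u' \<Longrightarrow> word_eq R v v' \<Longrightarrow> word_eq R (u @ v) (u' @ v')"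
  using word_eq.cong[of R u u' "[]" v] word_eq.cong[of R v v' u' "[]"] word_eq.trans by fastforce

lemma gmul_wclass: "gmul R (wclass R u) (wclass R v) = wclass R (u @ v)"
  unfolding gmul_def wclass_def
  using word_eq_append word_eq.trans word_eq.refl by blast

lemma gmul_Gamma: "g \<in> Gamma R \<Longrightarrow> h \<in> Gamma R \<Longrightarrow> gmul R g h \<in> Gamma R"
  unfolding Gamma_def using gmul_wclass by blast

lemma sigma_mul:
  assumes "g \<in> Gamma R" "h \<in> Gamma R" "\<forall>g\<in>Gamma R. sigma g \<in> g"
  shows "word_eq R (sigma g @ sigma h) (sigma (gmul R g h))"
proof -
  obtain u v where g: "g = wclass R u" and h: "h = wclass R v" using assms unfolding Gamma_def by blast
  have gh: "gmul R g h \<in> Gamma R" using gmul_Gamma assms by blast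
  have "word_eq R u (sigma g)" "word_eq R v (sigma h)" "word_eq R (u @ v) (sigma (gmul R g h))"
    using assms gh unfolding g h gmul_wclass by (auto simp: wclass_def)
  then show ?thesis using word_eq_append word_eq.sym word_eq.trans by blast
qed



lemma pointwise:
  fixes Tg Th Tgh Pg Ph Pgh Fg Fh Fgh :: "complex mat" and d :: real
  assumes gnf: "good_norm_family nrm"
    and u: "unitary_mat m Tg" "unitary_mat m Th" "unitary_mat m Tgh" "unitary_mat m Pg" "unitary_mat m Ph"
      "unitary_mat m Pgh" "unitary_mat m Fg" "unitary_mat m Fh" "unitary_mat m Fgh"
    and d: "d > 0"
    and b: "nrm m (Tg - Fg) \<le> a" "nrm m (Th - Fh) \<le> a" "nrm m (Pg - Fg) \<le> b" "nrm m (Ph - Fh) \<le> b"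
      "nrm m (Tg - Pg) \<le> c" "nrm m (Th - Ph) \<le> c" "nrm m (Fg * Fh - Fgh) \<le> e" "nrm m (Pg * Ph - Pgh) \<le> f"
  shows "nrm m (((1 / complex_of_real d) \<cdot>\<^sub>m (Tg * Th - Tgh)) * adj Fgh
     - (Fg * ((1 / complex_of_real d) \<cdot>\<^sub>m ((Th - Ph) * adj Fh)) * adj Fg
        - (1 / complex_of_real d) \<cdot>\<^sub>m ((Tgh - Pgh) * adj Fgh)
        + (1 / complex_of_real d) \<cdot>\<^sub>m ((Tg - Pg) * adj Fg)))
     \<le> (c * e + c * e + a * a + b * b + f) / d"
proof -
  note c = u[THEN unitary_carrier]
  define Gg where "Gg = adj Fg"
  define Gh where "Gh = adj Fh"
  define Ggh where "Ggh = adj Fgh"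
  have uG: "unitary_mat m Gg" "unitary_mat m Gh" "unitary_mat m Ggh"
    unfolding Gg_def Gh_def Ggh_def using u unitary_adj by auto
  note cG = uG[THEN unitary_carrier]
  have rel: "Gg * Fg = 1\<^sub>m m" "Fg * Gg = 1\<^sub>m m" "Gh * Fh = 1\<^sub>m m" "Fh * Gh = 1\<^sub>m m" "Ggh * Fgh = 1\<^sub>m m" "Fgh * Ggh = 1\<^sub>m m"
    using u unfolding Gg_def Gh_def Ggh_def unitary_mat_def by auto
  define s where "s = 1 / complex_of_real d"
  define Z where "Z = (Tg * Th - Tgh) * Ggh - (Fg * (Th - Ph) * Gh * Gg - (Tgh - Pgh) * Ggh + (Tg - Pg) * Gg)"
  have eqZ: "(s \<cdot>\<^sub>m (Tg * Th - Tgh)) * Ggh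
     - (Fg * (s \<cdot>\<^sub>m ((Th - Ph) * Gh)) * Gg - s \<cdot>\<^sub>m ((Tgh - Pgh) * Ggh) + s \<cdot>\<^sub>m ((Tg - Pg) * Gg)) = s \<cdot>\<^sub>m Z"
    unfolding Z_def using c cG by (simp add: sq_simps[where m=m] sq_alg(5-8)[where m=m])
  have cZ: "Z \<in> carrier_mat m m" unfolding Z_def using c cG by (simp add: sq_simps[where m=m])
  define E where "E = Fg * Fh - Fgh"
  define Fd where "Fd = Pg * Ph - Pgh"
  have cE: "E \<in> carrier_mat m m" "Fd \<in> carrier_mat m m" unfolding E_def Fd_def using c by (auto simp: sq_simps[where m=m])
  have Zeq: "Z = (Tg - Pg) * Gg * E * Ggh + Fg * (Th - Ph) * Gh * Gg * E * Ggh
      + ((Tg - Fg) * (Th - Fh) - (Pg - Fg) * (Ph - Fh)) * Ggh + Fd * Ggh"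
    unfolding Z_def E_def Fd_def by (rule key_mat[OF c cG rel])
  note N = nrm_nonneg[OF gnf] nrm_tri[OF gnf] nrm_sub[OF gnf] nrm_left[OF gnf] nrm_right[OF gnf]
  have cc: "Tg - Pg \<in> carrier_mat m m" "Th - Ph \<in> carrier_mat m m" "Tg - Fg \<in> carrier_mat m m"
    "Th - Fh \<in> carrier_mat m m" "Pg - Fg \<in> carrier_mat m m" "Ph - Fh \<in> carrier_mat m m"
    using c by (auto simp: sq_simps[where m=m])
  have t1: "nrm m ((Tg - Pg) * Gg * E * Ggh) \<le> c * e"
  proof -
    have "nrm m ((Tg - Pg) * Gg * E * Ggh) = nrm m ((Tg - Pg) * Gg * E)"
      using N(5) uG cc cE cG sq_simps(1) by metis
    also have "\<dots> \<le> nrm m ((Tg - Pg) * Gg) * nrm m E" using N(3) cc cE cG sq_simps(1) by metis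
    also have "\<dots> = nrm m (Tg - Pg) * nrm m E" using N(5) uG cc by metis
    also have "\<dots> \<le> c * e" using b E_def N(1) cc cE by (meson mult_mono order_trans)
    finally show ?thesis .
  qed
  have t2: "nrm m (Fg * (Th - Ph) * Gh * Gg * E * Ggh) \<le> c * e"
  proof -
    have "nrm m (Fg * (Th - Ph) * Gh * Gg * E * Ggh) = nrm m (Fg * (Th - Ph) * Gh * Gg * E)"
      using N(5) uG cc cE cG c sq_simps(1) by metis
    also have "\<dots> \<le> nrm m (Fg * (Th - Ph) * Gh * Gg) * nrm m E" using N(3) cc cE cG c sq_simps(1) by metis
    also have "nrm m (Fg * (Th - Ph) * Gh * Gg) = nrm m (Fg * (Th - Ph) * Gh)" using N(5) uG cc c cG sq_simps(1) by metis
    also have "\<dots> = nrm m (Th - Ph)" using nrm_uinv[OF gnf] u uG cc by metis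
    also have "nrm m (Th - Ph) * nrm m E \<le> c * e" using b E_def N(1) cc cE by (meson mult_mono order_trans)
    finally show ?thesis by simp
  qed
  have t3: "nrm m (((Tg - Fg) * (Th - Fh) - (Pg - Fg) * (Ph - Fh)) * Ggh) \<le> a * a + b * b"
  proof -
    have "nrm m (((Tg - Fg) * (Th - Fh) - (Pg - Fg) * (Ph - Fh)) * Ggh) = nrm m ((Tg - Fg) * (Th - Fh) - (Pg - Fg) * (Ph - Fh))"
      using N(5) uG cc sq_simps(1,3) by metis
    also have "\<dots> \<le> nrm m ((Tg - Fg) * (Th - Fh)) + nrm m ((Pg - Fg) * (Ph - Fh))"
      using nrm_minus_le[OF gnf] cc sq_simps(1) by metis
    also have "\<dots> \<le> nrm m (Tg - Fg) * nrm m (Th - Fh) + nrm m (Pg - Fg) * nrm m (Ph - Fh)"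
      using N(3) cc by (meson add_mono)
    also have "\<dots> \<le> a * a + b * b" using b N(1) cc by (meson add_mono mult_mono order_trans)
    finally show ?thesis .
  qed
  have t4: "nrm m (Fd * Ggh) \<le> f" using N(5) uG cE b Fd_def by metis
  have cT: "(Tg - Pg) * Gg * E * Ggh \<in> carrier_mat m m" "Fg * (Th - Ph) * Gh * Gg * E * Ggh \<in> carrier_mat m m"
    "((Tg - Fg) * (Th - Fh) - (Pg - Fg) * (Ph - Fh)) * Ggh \<in> carrier_mat m m" "Fd * Ggh \<in> carrier_mat m m"
    using c cG cc cE by (auto simp: sq_simps[where m=m])
  have "nrm m Z \<le> c * e + c * e + (a * a + b * b) + f"
  proof -
    have "nrm m Z \<le> nrm m ((Tg - Pg) * Gg * E * Ggh) + nrm m (Fg * (Th - Ph) * Gh * Gg * E * Ggh)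
      + nrm m (((Tg - Fg) * (Th - Fh) - (Pg - Fg) * (Ph - Fh)) * Ggh) + nrm m (Fd * Ggh)"
      unfolding Zeq using N(2) cT sq_simps(2) by (smt (verit))
    then show ?thesis using t1 t2 t3 t4 by linarith
  qed
  moreover have "nrm m (s \<cdot>\<^sub>m Z) = nrm m Z / d"
    using nrm_scale[OF gnf cZ] d unfolding s_def by (simp add: norm_divide)
  ultimately have "nrm m (s \<cdot>\<^sub>m Z) \<le> (c * e + c * e + a * a + b * b + f) / d"
    using d by (simp add: divide_right_mono)
  then show ?thesis using eqZ unfolding s_def Gg_def Gh_def Ggh_def by simp
qed

theorem proposition3p7:
  fixes U :: "nat filter"
    and nrm :: "nat \<Rightarrow> complex mat \<Rightarrow> real"
    and R :: "('s::finite) word set"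
    and k :: "nat \<Rightarrow> nat"
    and phi psi :: "nat \<Rightarrow> 's \<Rightarrow> complex mat"
    and sigma :: "'s word set \<Rightarrow> 's word"
    and phit :: "nat \<Rightarrow> 's word set \<Rightarrow> complex mat"
  assumes U: "nonprincipal_ultrafilter U"
    and finR: "finite R"
    and norms: "good_norm_family nrm"
    and phi_rep: "asymptotic_rep U nrm R k phi"
    and psi_rep: "asymptotic_rep U nrm R k psi"
    and close: "bigO_U U (\<lambda>n. Max (range (\<lambda>s. nrm (k n) (phi n s - psi n s))))
                          (\<lambda>n. defect nrm R (k n) (phi n))"
    and psi_small: "smallo_U U (\<lambda>n. defect nrm R (k n) (psi n))
                               (\<lambda>n. defect nrm R (k n) (phi n))"
    and sigma: "\<forall>g\<in>Gamma R. sigma g \<in> g"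
    and phit_unitary: "\<forall>n. \<forall>g\<in>Gamma R. unitary_mat (k n) (phit n g)"
    and phit_one: "\<forall>n. phit n (gone R) = 1\<^sub>m (k n)"
    and phit_inv: "\<forall>n. \<forall>g\<in>Gamma R. phit n (ginv R g) = adj (phit n g)"
    and phit_close: "\<forall>g\<in>Gamma R. bigO_U U
                       (\<lambda>n. nrm (k n) (weval (phi n) (k n) (sigma g) - phit n g))
                       (\<lambda>n. defect nrm R (k n) (phi n))"
  shows "\<exists>beta :: 's word set \<Rightarrow> nat \<Rightarrow> complex mat.
           (\<forall>g\<in>Gamma R. (\<forall>n. beta g n \<in> carrier_mat (k n) (k n)) \<and>
                         (\<exists>C. \<forall>n. nrm (k n) (beta g n) \<le> C)) \<and>
           (\<forall>g\<in>Gamma R. \<forall>h\<in>Gamma R.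
              ((\<lambda>n. nrm (k n)
                  (cocycle_alpha nrm R k phi sigma phit g h n -
                   (weval (phi n) (k n) (sigma g) * beta h n * adj (weval (phi n) (k n) (sigma g))
                    - beta (gmul R g h) n + beta g n))) \<longlongrightarrow> 0) U)"
proof -
  define d where "d = (\<lambda>n. defect nrm R (k n) (phi n))"
  define F where "F = (\<lambda>x n. weval (phi n) (k n) (sigma x))"
  define P where "P = (\<lambda>x n. weval (psi n) (k n) (sigma x))"
  define raw where "raw = (\<lambda>x n. (phit n x - P x n) * adj (F x n))"
  define Mb where "Mb = (\<lambda>x. SOME M. eventually (\<lambda>n. nrm (k n) (raw x n) \<le> M * d n) U)"
  define beta where "beta = (\<lambda>x n. if d n > 0 \<and> nrm (k n) (raw x n) \<le> Mb x * d n
     then (1 / complex_of_real (d n)) \<cdot>\<^sub>m raw x n else 0\<^sub>m (k n) (k n))"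
  have phiu: "\<And>n s. unitary_mat (k n) (phi n s)" using phi_rep unfolding asymptotic_rep_def by blast
  have psiu: "\<And>n s. unitary_mat (k n) (psi n s)" using psi_rep unfolding asymptotic_rep_def by blast
  have Fu: "unitary_mat (k n) (F x n)" for x n unfolding F_def by (rule weval_unitary) (rule phiu)
  have Pu: "unitary_mat (k n) (P x n)" for x n unfolding P_def by (rule weval_unitary) (rule psiu)
  have Tu: "unitary_mat (k n) (phit n x)" if "x \<in> Gamma R" for x n using phit_unitary that by blast
  have dnn: "0 \<le> d n" for n unfolding d_def by (rule defect_ge0[OF norms finR phiu])
  have dlim: "(d \<longlongrightarrow> 0) U" using phi_rep unfolding asymptotic_rep_def d_def by blast
  obtain C0 where C0: "eventually (\<lambda>n. Max (range (\<lambda>s. nrm (k n) (phi n s - psi n s))) \<le> C0 * d n) U"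
    using close unfolding bigO_U_def d_def by blast
  have FP: "\<exists>C\<ge>0. eventually (\<lambda>n. nrm (k n) (P x n - F x n) \<le> C * d n) U" for x
  proof (rule exI[of _ "real (length (sigma x)) * max C0 0"], intro conjI)
    show "0 \<le> real (length (sigma x)) * max C0 0" by simp
    show "eventually (\<lambda>n. nrm (k n) (P x n - F x n) \<le> real (length (sigma x)) * max C0 0 * d n) U"
      using C0
    proof eventually_elim
      case (elim n)
      have "nrm (k n) (P x n - F x n) = nrm (k n) (F x n - P x n)"
        using nrm_minus_comm[OF norms] Fu Pu unitary_carrier by metis
      also have "\<dots> \<le> real (length (sigma x)) * Max (range (\<lambda>s. nrm (k n) (phi n s - psi n s)))"
        unfolding F_def P_def by (rule weval_close[OF norms phiu psiu])
      also have "\<dots> \<le> real (length (sigma x)) * (max C0 0 * d n)"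
      proof (intro mult_left_mono)
        have "C0 * d n \<le> max C0 0 * d n" using dnn[of n] by (intro mult_right_mono) auto
        then show "Max (range (\<lambda>s. nrm (k n) (phi n s - psi n s))) \<le> max C0 0 * d n"
          using elim by linarith
      qed simp
      finally show ?case by simp
    qed
  qed
  have TF: "\<exists>C\<ge>0. eventually (\<lambda>n. nrm (k n) (phit n x - F x n) \<le> C * d n) U" if x: "x \<in> Gamma R" for x
  proof -
    obtain C where C: "eventually (\<lambda>n. nrm (k n) (F x n - phit n x) \<le> C * d n) U"
      using phit_close x unfolding bigO_U_def F_def d_def by blast
    show ?thesis
    proof (rule exI[of _ "max C 0"], intro conjI)
      show "eventually (\<lambda>n. nrm (k n) (phit n x - F x n) \<le> max C 0 * d n) U"
        using C
      proof eventually_elim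
        case (elim n)
        have "nrm (k n) (phit n x - F x n) = nrm (k n) (F x n - phit n x)"
          using nrm_minus_comm[OF norms] Fu Tu[OF x] unitary_carrier by metis
        also have "\<dots> \<le> max C 0 * d n" using elim dnn[of n] by (meson max.cobounded1 mult_right_mono order_trans)
        finally show ?case .
      qed
    qed simp
  qed
  have TP: "\<exists>C\<ge>0. eventually (\<lambda>n. nrm (k n) (phit n x - P x n) \<le> C * d n) U" if x: "x \<in> Gamma R" for x
  proof -
    obtain C1 where C1: "C1 \<ge> 0" "eventually (\<lambda>n. nrm (k n) (phit n x - F x n) \<le> C1 * d n) U" using TF[OF x] by blast
    obtain C2 where C2: "C2 \<ge> 0" "eventually (\<lambda>n. nrm (k n) (P x n - F x n) \<le> C2 * d n) U" using FP by blast
    show ?thesis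
    proof (rule exI[of _ "C1 + C2"], intro conjI)
      show "eventually (\<lambda>n. nrm (k n) (phit n x - P x n) \<le> (C1 + C2) * d n) U"
        using C1(2) C2(2)
      proof eventually_elim
        case (elim n)
        have c: "phit n x \<in> carrier_mat (k n) (k n)" "P x n \<in> carrier_mat (k n) (k n)" "F x n \<in> carrier_mat (k n) (k n)"
          using Fu Pu Tu[OF x] unitary_carrier by auto
        have "nrm (k n) (phit n x - P x n) \<le> nrm (k n) (phit n x - F x n) + nrm (k n) (F x n - P x n)"
          using nrm_tri[OF norms] sq_add(1)[OF c(1,3,2)] c sq_simps(3) by metis
        also have "nrm (k n) (F x n - P x n) = nrm (k n) (P x n - F x n)"
          using nrm_minus_comm[OF norms] c by metis
        finally show ?case using elim by (simp add: algebra_simps)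
      qed
    qed (use C1 C2 in simp)
  qed
  have rawn: "nrm (k n) (raw x n) = nrm (k n) (phit n x - P x n)" if x: "x \<in> Gamma R" for x n
    unfolding raw_def using nrm_right[OF norms] Fu Pu Tu[OF x] unitary_adj unitary_carrier sq_simps(3) by metis
  have rawc: "raw x n \<in> carrier_mat (k n) (k n)" if x: "x \<in> Gamma R" for x n
    unfolding raw_def using Fu Pu Tu[OF x] unitary_adj unitary_carrier by (simp add: sq_simps[where m="k n"])
  have Mb: "eventually (\<lambda>n. nrm (k n) (raw x n) \<le> Mb x * d n) U" if x: "x \<in> Gamma R" for x
  proof -
    have "\<exists>M. eventually (\<lambda>n. nrm (k n) (raw x n) \<le> M * d n) U"
      using TP[OF x] rawn[OF x] by auto
    then show ?thesis unfolding Mb_def by (rule someI_ex)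
  qed
  have beta_ev: "eventually (\<lambda>n. beta x n = (if d n > 0 then (1 / complex_of_real (d n)) \<cdot>\<^sub>m raw x n else 0\<^sub>m (k n) (k n))) U"
    if x: "x \<in> Gamma R" for x
    using Mb[OF x] by eventually_elim (auto simp: beta_def)
  show ?thesis
  proof (rule exI[of _ beta], rule conjI; intro ballI)
    fix g assume g: "g \<in> Gamma R"
    show "(\<forall>n. beta g n \<in> carrier_mat (k n) (k n)) \<and> (\<exists>C. \<forall>n. nrm (k n) (beta g n) \<le> C)"
    proof (intro conjI)
      show "\<forall>n. beta g n \<in> carrier_mat (k n) (k n)" unfolding beta_def using rawc[OF g] by simp
    next
      have "nrm (k n) (beta g n) \<le> max (Mb g) 0" for n
      proof (cases "d n > 0 \<and> nrm (k n) (raw g n) \<le> Mb g * d n")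
        case True
        then have "nrm (k n) (beta g n) = nrm (k n) (raw g n) / d n"
          unfolding beta_def using nrm_scale[OF norms rawc[OF g]] by (simp add: norm_divide)
        also have "\<dots> \<le> Mb g" using True by (simp add: divide_le_eq)
        finally show ?thesis by simp
      next
        case False
        then have "beta g n = 0\<^sub>m (k n) (k n)" unfolding beta_def by auto
        then show ?thesis by (simp add: nrm_zero[OF norms])
      qed
      then show "\<exists>C. \<forall>n. nrm (k n) (beta g n) \<le> C" by blast
    qed
  next
    fix g h assume g: "g \<in> Gamma R" and h: "h \<in> Gamma R"
    define gh where "gh = gmul R g h"
    have ghG: "gh \<in> Gamma R" unfolding gh_def using gmul_Gamma g h by blast
    obtain Ca1 where Ca1: "Ca1 \<ge> 0" "eventually (\<lambda>n. nrm (k n) (phit n g - F g n) \<le> Ca1 * d n) U" using TF[OF g] by blast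
    obtain Ca2 where Ca2: "Ca2 \<ge> 0" "eventually (\<lambda>n. nrm (k n) (phit n h - F h n) \<le> Ca2 * d n) U" using TF[OF h] by blast
    obtain Cb1 where Cb1: "Cb1 \<ge> 0" "eventually (\<lambda>n. nrm (k n) (P g n - F g n) \<le> Cb1 * d n) U" using FP by blast
    obtain Cb2 where Cb2: "Cb2 \<ge> 0" "eventually (\<lambda>n. nrm (k n) (P h n - F h n) \<le> Cb2 * d n) U" using FP by blast
    obtain Cc1 where Cc1: "Cc1 \<ge> 0" "eventually (\<lambda>n. nrm (k n) (phit n g - P g n) \<le> Cc1 * d n) U" using TP[OF g] by blast
    obtain Cc2 where Cc2: "Cc2 \<ge> 0" "eventually (\<lambda>n. nrm (k n) (phit n h - P h n) \<le> Cc2 * d n) U" using TP[OF h] by blast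
    have we: "word_eq R (sigma g @ sigma h) (sigma gh)" unfolding gh_def by (rule sigma_mul[OF g h sigma])
    obtain Ce0 where Ce0: "\<forall>n. nrm (k n) (weval (phi n) (k n) (sigma g @ sigma h) - weval (phi n) (k n) (sigma gh)) \<le> Ce0 * d n"
      using word_eq_bound[where phi=phi and k=k, OF norms finR phiu we] unfolding d_def by blast
    obtain Cf0 where Cf0: "\<forall>n. nrm (k n) (weval (psi n) (k n) (sigma g @ sigma h) - weval (psi n) (k n) (sigma gh)) \<le> Cf0 * defect nrm R (k n) (psi n)"
      using word_eq_bound[where phi=psi and k=k, OF norms finR psiu we] by blast
    obtain eps where eps: "\<forall>n. eps n \<ge> 0" "(eps \<longlongrightarrow> 0) U" "\<forall>n. defect nrm R (k n) (psi n) = eps n * d n"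
      using psi_small unfolding smallo_U_def d_def by blast
    define Ca where "Ca = Ca1 + Ca2"
    define Cb where "Cb = Cb1 + Cb2"
    define Cc where "Cc = Cc1 + Cc2"
    define Ce where "Ce = max Ce0 0"
    define Cf where "Cf = max Cf0 0"
    define K where "K = Cc * Ce + Cc * Ce + Ca * Ca + Cb * Cb"
    have Ke: "\<forall>n. nrm (k n) (F g n * F h n - F gh n) \<le> Ce * d n"
    proof
      fix n
      have "nrm (k n) (F g n * F h n - F gh n) \<le> Ce0 * d n"
        using Ce0[rule_format, of n] unfolding F_def weval_append[of "k n" "phi n", OF phiu] by simp
      also have "\<dots> \<le> Ce * d n" unfolding Ce_def using dnn[of n] by (simp add: mult_right_mono)
      finally show "nrm (k n) (F g n * F h n - F gh n) \<le> Ce * d n" .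
    qed
    have Kf: "\<forall>n. nrm (k n) (P g n * P h n - P gh n) \<le> Cf * eps n * d n"
    proof
      fix n
      have "nrm (k n) (P g n * P h n - P gh n) \<le> Cf0 * (eps n * d n)"
        using Cf0[rule_format, of n] eps(3) unfolding P_def weval_append[of "k n" "psi n", OF psiu] by simp
      also have "\<dots> \<le> Cf * eps n * d n" unfolding Cf_def using dnn[of n] eps(1)
        by (simp add: mult_right_mono mult.assoc)
      finally show "nrm (k n) (P g n * P h n - P gh n) \<le> Cf * eps n * d n" .
    qed
    define X where "X = (\<lambda>n. cocycle_alpha nrm R k phi sigma phit g h n -
                   (weval (phi n) (k n) (sigma g) * beta h n * adj (weval (phi n) (k n) (sigma g))
                    - beta (gmul R g h) n + beta g n))"
    have ev: "eventually (\<lambda>n. 0 \<le> nrm (k n) (X n) \<and> nrm (k n) (X n) \<le> K * d n + Cf * eps n) U"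
      using Ca1(2) Ca2(2) Cb1(2) Cb2(2) Cc1(2) Cc2(2) beta_ev[OF g] beta_ev[OF h] beta_ev[OF ghG]
    proof eventually_elim
      case (elim n)
      note cF = Fu[THEN unitary_carrier] Pu[THEN unitary_carrier]
      have dn: "defect nrm R (k n) (phi n) = d n" unfolding d_def by simp
      have Fn: "weval (phi n) (k n) (sigma x) = F x n" for x unfolding F_def by simp
      have z: "A * 0\<^sub>m (k n) (k n) = 0\<^sub>m (k n) (k n)" "0\<^sub>m (k n) (k n) * A = 0\<^sub>m (k n) (k n)"
        if "A \<in> carrier_mat (k n) (k n)" for A :: "complex mat" using that by auto
      have z2: "0\<^sub>m (k n) (k n) - 0\<^sub>m (k n) (k n) = (0\<^sub>m (k n) (k n) :: complex mat)"
        "0\<^sub>m (k n) (k n) + 0\<^sub>m (k n) (k n) = (0\<^sub>m (k n) (k n) :: complex mat)" by (auto intro!: eq_matI)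
      note cT = Tu[OF g, THEN unitary_carrier] Tu[OF h, THEN unitary_carrier] Tu[OF ghG, THEN unitary_carrier]
      show ?case
      proof (cases "d n > 0")
        case False
        then have dz: "d n = 0" using dnn[of n] by simp
        have "X n = 0\<^sub>m (k n) (k n)"
          unfolding X_def using elim(7-9) False cF cT
          by (simp add: cocycle_alpha_def cocycle_c_def dn Let_def gh_def[symmetric] Fn
               sq_simps[where m="k n"] z z2)
        then show ?thesis using dz eps(1) by (simp add: nrm_zero[OF norms] Cf_def)
      next
        case True
        have bnd: "nrm (k n) (X n) \<le> ((Cc * d n) * (Ce * d n) + (Cc * d n) * (Ce * d n) + (Ca * d n) * (Ca * d n)
                + (Cb * d n) * (Cb * d n) + Cf * eps n * d n) / d n"
        proof -
          have bg: "beta g n = (1 / complex_of_real (d n)) \<cdot>\<^sub>m ((phit n g - P g n) * adj (F g n))"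
            using elim(7) True unfolding raw_def by simp
          have bh: "beta h n = (1 / complex_of_real (d n)) \<cdot>\<^sub>m ((phit n h - P h n) * adj (F h n))"
            using elim(8) True unfolding raw_def by simp
          have bgh: "beta gh n = (1 / complex_of_real (d n)) \<cdot>\<^sub>m ((phit n gh - P gh n) * adj (F gh n))"
            using elim(9) True unfolding raw_def by simp
          show ?thesis
          unfolding X_def cocycle_alpha_def cocycle_c_def Let_def gh_def[symmetric] dn Fn if_P[OF True] bg bh bgh
          apply (rule pointwise[OF norms Tu[OF g] Tu[OF h] Tu[OF ghG] Pu Pu Pu Fu Fu Fu True])
          using elim(1-6) Ke Kf dnn[of n] Ca1(1) Ca2(1) Cb1(1) Cb2(1) Cc1(1) Cc2(1)
          unfolding Ca_def Cb_def Cc_def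
          by (auto intro: order_trans mult_right_mono simp: algebra_simps)
        qed
        also have "\<dots> = K * d n + Cf * eps n" using True unfolding K_def by (simp add: field_simps power2_eq_square)
        finally have "nrm (k n) (X n) \<le> K * d n + Cf * eps n" .
        moreover have "0 \<le> nrm (k n) (X n)"
          unfolding X_def cocycle_alpha_def cocycle_c_def Let_def
          using nrm_nonneg[OF norms] elim(7-9) cF cT rawc[OF g] rawc[OF h] rawc[OF ghG] F_def gh_def
          by (simp add: sq_simps[where m="k n"])
        ultimately show ?thesis by simp
      qed
    qed
    have lim: "((\<lambda>n. K * d n + Cf * eps n) \<longlongrightarrow> 0) U"
      using tendsto_add[OF tendsto_mult_right_zero[OF dlim, of K] tendsto_mult_right_zero[OF eps(2), of Cf]] by simp
    have "((\<lambda>n. nrm (k n) (X n)) \<longlongrightarrow> 0) U"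
      by (rule tendsto_sandwich[OF _ _ tendsto_const lim]) (use ev in \<open>auto elim: eventually_mono\<close>)
    then show "((\<lambda>n. nrm (k n) (cocycle_alpha nrm R k phi sigma phit g h n -
                   (weval (phi n) (k n) (sigma g) * beta h n * adj (weval (phi n) (k n) (sigma g))
                    - beta (gmul R g h) n + beta g n))) \<longlongrightarrow> 0) U" unfolding X_def .
  qed
qed


end
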